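(* For every $k\in\omega$ and $\xi<\omega_1$, the sets $\mathcal{D}(k)=\{p\in\mathbb{P}: n^p\ge k\text{ and }k\in s^p\}$ and $\mathcal{E}(\xi)=\{p\in\mathbb{P}:\xi\in v^p\}$ are dense in the forcing notion $\mathbb{P}$ defined below.
   Context: For $n\in\omega$, $2^n$ is the set of $0$-$1$ sequences of length $n$, with metric $d(\eta,\eta')=2^{-k}$ for $\eta\ne\eta'$, where $k$ is least with $\eta\restriction k\neq\eta'\restriction k$. Let $\mathbb{L}_1(n)$ be the set of all $1$-Lipschitz functions $g\colon 2^n\to 2^n$. For a set $A$, $[A]^2$ denotes the set of $2$-element subsets of $A$, and $[A]^{<\omega}$ the finite subsets; $\rho(\alpha,\beta)$ means $\rho(\{\alpha,\beta\})$. A condition $p\in\mathbb{P}$ is a tuple $p=(n^p,s^p,v^p,\mathcal{F}^p,\gamma^p,\rho^p)$ such that: (1) $n^p\in\omega$, $s^p\in[\omega]^{<\omega}$, $v^p\in[\omega_1]^{<\omega}$; (2) $\mathcal{F}^p=\{f^p_i: i\in s^p\}\subseteq\mathbb{L}_1(n^p)$ and $\rho^p\colon[v^p]^2\to s^p$; (2') $\rho^p(\alpha,\beta)\neq\rho^p(\alpha',\beta)$ whenever $\alpha<\alpha'<\beta$; (3) $\gamma^p\colon v^p\to 2^{n^p}$ is one-to-one; (4) $\gamma^p(\alpha)=f^p_{\rho^p(\alpha,\beta)}(\gamma^p(\beta))$ whenever $\alpha<\beta$ are in $v^p$. The order: $p\le q$ ($q$ is stronger) iff (5) $n^p\le n^q$,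 $s^p\subseteq s^q$, $v^p\subseteq v^q$; (6) $f^q_i(\eta)\restriction n^p=f^p_i(\eta\restriction n^p)$ for each $i\in s^p$ and every $\eta\in 2^{n^q}$; (7) $\gamma^q(\alpha)\restriction n^p=\gamma^p(\alpha)$ for every $\alpha\in v^p$; (8) $\rho^q\restriction[v^p]^2=\rho^p$. A set $D\subseteq\mathbb{P}$ is dense if for every $p\in\mathbb{P}$ there is $q\in D$ with $p\le q$. *)

theory Defs
  imports Complex_Main "HOL-Library.Countable_Set"
begin

text \<open>2^n : 0-1 sequences of length n, as boolean lists.\<close>
definition bits :: "nat \<Rightarrow> bool list set" where
  "bits n = {\<eta>. length \<eta> = n}"

definition seq_dist :: "bool list \<Rightarrow> bool list \<Rightarrow> real" where
  "seq_dist \<eta> \<eta>' = (if \<eta> = \<eta>' then 0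
     else (1/2) ^ (LEAST k. take k \<eta> \<noteq> take k \<eta>'))"

definition Lip1 :: "nat \<Rightarrow> (bool list \<Rightarrow> bool list) \<Rightarrow> bool" where
  "Lip1 n g \<longleftrightarrow> (\<forall>\<eta>\<in>bits n. g \<eta> \<in> bits n) \<and>
     (\<forall>\<eta>\<in>bits n. \<forall>\<eta>'\<in>bits n. seq_dist (g \<eta>) (g \<eta>') \<le> seq_dist \<eta> \<eta>')"

text \<open>A tuple (n, s, v, F = {f_i : i in s}, gamma, rho); rho is applied to 2-element sets.\<close>
record 'a cond =
  cn :: nat
  cs :: "nat set"
  cv :: "'a set"
  cf :: "nat \<Rightarrow> bool list \<Rightarrow> bool list"
  cgamma :: "'a \<Rightarrow> bool list"
  crho :: "'a set \<Rightarrow> nat"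

definition isCond :: "('a::linorder) cond \<Rightarrow> bool" where
  "isCond p \<longleftrightarrow>
     finite (cs p) \<and> finite (cv p) \<and>
     (\<forall>i\<in>cs p. Lip1 (cn p) (cf p i)) \<and>
     (\<forall>\<alpha>\<in>cv p. \<forall>\<beta>\<in>cv p. \<alpha> \<noteq> \<beta> \<longrightarrow> crho p {\<alpha>, \<beta>} \<in> cs p) \<and>
     (\<forall>\<alpha>\<in>cv p. \<forall>\<alpha>'\<in>cv p. \<forall>\<beta>\<in>cv p. \<alpha> < \<alpha>' \<and> \<alpha>' < \<beta> \<longrightarrow>
         crho p {\<alpha>, \<beta>} \<noteq> crho p {\<alpha>', \<beta>}) \<and>
     inj_on (cgamma p) (cv p) \<and> (\<forall>\<alpha>\<in>cv p. cgamma p \<alpha> \<in> bits (cn p)) \<and>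
     (\<forall>\<alpha>\<in>cv p. \<forall>\<beta>\<in>cv p. \<alpha> < \<beta> \<longrightarrow>
         cgamma p \<alpha> = cf p (crho p {\<alpha>, \<beta>}) (cgamma p \<beta>))"

definition Pforce :: "('a::linorder) cond set" where
  "Pforce = {p. isCond p}"

text \<open>p \<le> q : q is stronger.\<close>
definition cond_le :: "('a::linorder) cond \<Rightarrow> 'a cond \<Rightarrow> bool" where
  "cond_le p q \<longleftrightarrow>
     cn p \<le> cn q \<and> cs p \<subseteq> cs q \<and> cv p \<subseteq> cv q \<and>
     (\<forall>i\<in>cs p. \<forall>\<eta>\<in>bits (cn q). take (cn p) (cf q i \<eta>) = cf p i (take (cn p) \<eta>)) \<and>
     (\<forall>\<alpha>\<in>cv p. take (cn p) (cgamma q \<alpha>) = cgamma p \<alpha>) \<and>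
     (\<forall>\<alpha>\<in>cv p. \<forall>\<beta>\<in>cv p. \<alpha> \<noteq> \<beta> \<longrightarrow> crho q {\<alpha>, \<beta>} = crho p {\<alpha>, \<beta>})"

definition dense_in_P :: "('a::linorder) cond set \<Rightarrow> bool" where
  "dense_in_P D \<longleftrightarrow> D \<subseteq> Pforce \<and> (\<forall>p\<in>Pforce. \<exists>q\<in>D. cond_le p q)"

definition Dset :: "nat \<Rightarrow> ('a::linorder) cond set" where
  "Dset k = {p \<in> Pforce. cn p \<ge> k \<and> k \<in> cs p}"

definition Eset :: "'a::linorder \<Rightarrow> 'a cond set" where
  "Eset \<xi> = {p \<in> Pforce. \<xi> \<in> cv p}"

end

theory Submission
  imports Defs
begin

lemma seq_dist_nonneg: "0 \<le> seq_dist a b"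
  by (simp add: seq_dist_def)

lemma seq_dist_same_suffix:
  assumes "length a = length b"
  shows "seq_dist (a @ c) (b @ c) = seq_dist a b"
  using assms by (simp add: seq_dist_def take_append)

lemma seq_dist_take:
  "seq_dist (take n x) (take n y) \<le> seq_dist x y"
proof (cases "take n x = take n y")
  case True thus ?thesis by (simp add: seq_dist_def seq_dist_nonneg)
next
  case False
  hence ne: "x \<noteq> y" by auto
  let ?K = "LEAST k. take k x \<noteq> take k y"
  let ?K' = "LEAST k. take k (take n x) \<noteq> take k (take n y)"
  have "take ?K' (take n x) \<noteq> take ?K' (take n y)"
    by (rule LeastI[where k=n]) (use False in simp)
  hence "take (min ?K' n) x \<noteq> take (min ?K' n) y" by (simp add: min.commute)
  hence "?K \<le> min ?K' n" by (rule Least_le)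
  hence "?K \<le> ?K'" by simp
  hence "((1::real)/2) ^ ?K' \<le> (1/2) ^ ?K" by (rule power_decreasing) auto
  thus ?thesis using False ne by (simp add: seq_dist_def)
qed

lemma Lip1_pad:
  assumes "Lip1 n f" "n \<le> N"
  shows "Lip1 N (\<lambda>\<eta>. f (take n \<eta>) @ replicate (N - n) False)"
proof -
  have tb: "\<eta> \<in> bits N \<Longrightarrow> take n \<eta> \<in> bits n" for \<eta> using assms(2) by (simp add: bits_def)
  have fb: "\<eta> \<in> bits N \<Longrightarrow> f (take n \<eta>) \<in> bits n" for \<eta> using assms(1) tb by (simp add: Lip1_def)
  show ?thesis unfolding Lip1_def
  proof (intro conjI ballI)
    fix \<eta> assume "\<eta> \<in> bits N" thus "f (take n \<eta>) @ replicate (N - n) False \<in> bits N"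
      using fb assms(2) by (simp add: bits_def)
  next
    fix \<eta> \<eta>' assume h: "\<eta> \<in> bits N" "\<eta>' \<in> bits N"
    have "seq_dist (f (take n \<eta>) @ replicate (N - n) False) (f (take n \<eta>') @ replicate (N - n) False)
        = seq_dist (f (take n \<eta>)) (f (take n \<eta>'))"
      using fb[OF h(1)] fb[OF h(2)] by (intro seq_dist_same_suffix) (simp add: bits_def)
    also have "\<dots> \<le> seq_dist (take n \<eta>) (take n \<eta>')"
      using assms(1) tb h by (simp add: Lip1_def)
    also have "\<dots> \<le> seq_dist \<eta> \<eta>'" by (rule seq_dist_take)
    finally show "seq_dist (f (take n \<eta>) @ replicate (N - n) False) (f (take n \<eta>') @ replicate (N - n) False)
        \<le> seq_dist \<eta> \<eta>'" .
  qed
qed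

lemma Lip1_const: "c \<in> bits N \<Longrightarrow> Lip1 N (\<lambda>\<eta>. c)"
  by (simp add: Lip1_def seq_dist_def)

lemma D_dense_step:
  fixes p :: "('a::linorder) cond"
  assumes "isCond p"
  shows "\<exists>q. isCond q \<and> cn q \<ge> k \<and> k \<in> cs q \<and> cond_le p q"
proof -
  let ?n = "cn p"
  let ?N = "cn p + k"
  let ?pad = "replicate k False"
  define q :: "'a cond" where "q = \<lparr>cn = ?N, cs = insert k (cs p), cv = cv p,
     cf = (\<lambda>i. if i \<in> cs p then (\<lambda>\<eta>. cf p i (take ?n \<eta>) @ replicate (?N - ?n) False)
               else (\<lambda>\<eta>. replicate ?N False)),
     cgamma = (\<lambda>\<alpha>. cgamma p \<alpha> @ ?pad), crho = crho p\<rparr>"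
  have P: "finite (cs p)" "finite (cv p)" "\<forall>i\<in>cs p. Lip1 (cn p) (cf p i)"
     "\<forall>\<alpha>\<in>cv p. \<forall>\<beta>\<in>cv p. \<alpha> \<noteq> \<beta> \<longrightarrow> crho p {\<alpha>, \<beta>} \<in> cs p"
     "\<forall>\<alpha>\<in>cv p. \<forall>\<alpha>'\<in>cv p. \<forall>\<beta>\<in>cv p. \<alpha> < \<alpha>' \<and> \<alpha>' < \<beta> \<longrightarrow> crho p {\<alpha>, \<beta>} \<noteq> crho p {\<alpha>', \<beta>}"
     "inj_on (cgamma p) (cv p)" "\<forall>\<alpha>\<in>cv p. cgamma p \<alpha> \<in> bits (cn p)"
     "\<forall>\<alpha>\<in>cv p. \<forall>\<beta>\<in>cv p. \<alpha> < \<beta> \<longrightarrow> cgamma p \<alpha> = cf p (crho p {\<alpha>, \<beta>}) (cgamma p \<beta>)"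
    using assms unfolding isCond_def by blast+
  have "isCond q" unfolding isCond_def
  proof (intro conjI)
    have L: "Lip1 ?N (\<lambda>\<eta>. cf p i (take ?n \<eta>) @ replicate k False)" if "i \<in> cs p" for i
      using Lip1_pad[of ?n "cf p i" ?N] P(3) that by simp
    show "\<forall>i\<in>cs q. Lip1 (cn q) (cf q i)"
      using L by (auto simp: q_def intro!: Lip1_const simp: bits_def)
    show "inj_on (cgamma q) (cv q)" using P(6) by (auto simp: q_def inj_on_def)
    show "\<forall>\<alpha>\<in>cv q. \<forall>\<beta>\<in>cv q. \<alpha> < \<beta> \<longrightarrow> cgamma q \<alpha> = cf q (crho q {\<alpha>, \<beta>}) (cgamma q \<beta>)"
    proof (intro ballI impI)
      fix \<alpha> \<beta> assume h: "\<alpha> \<in> cv q" "\<beta> \<in> cv q" "\<alpha> < \<beta>"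
      have "crho p {\<alpha>,\<beta>} \<in> cs p" using P(4) h by (auto simp: q_def)
      moreover have "length (cgamma p \<beta>) = cn p" using P(7) h by (auto simp: q_def bits_def)
      ultimately show "cgamma q \<alpha> = cf q (crho q {\<alpha>, \<beta>}) (cgamma q \<beta>)"
        using P(8) h by (auto simp: q_def)
    qed
  qed (use P in \<open>auto simp: q_def bits_def\<close>)
  moreover have "cond_le p q" unfolding cond_le_def
  proof (intro conjI ballI impI)
    fix i \<eta> assume "i \<in> cs p" "\<eta> \<in> bits (cn q)"
    moreover hence "cf p i (take ?n \<eta>) \<in> bits ?n" using P(3) by (auto simp: Lip1_def q_def bits_def)
    ultimately show "take (cn p) (cf q i \<eta>) = cf p i (take (cn p) \<eta>)"
      by (auto simp: q_def bits_def)
  qed (use P in \<open>auto simp: q_def bits_def\<close>)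
  ultimately show ?thesis by (auto simp: q_def)
qed

lemma E_dense_step:
  fixes p :: "('a::linorder) cond" and \<xi> :: 'a
  assumes "isCond p" "\<xi> \<notin> cv p"
  shows "\<exists>q. isCond q \<and> \<xi> \<in> cv q \<and> cond_le p q"
proof -
  have P: "finite (cs p)" "finite (cv p)" "\<forall>i\<in>cs p. Lip1 (cn p) (cf p i)"
     "\<forall>\<alpha>\<in>cv p. \<forall>\<beta>\<in>cv p. \<alpha> \<noteq> \<beta> \<longrightarrow> crho p {\<alpha>, \<beta>} \<in> cs p"
     "\<forall>\<alpha>\<in>cv p. \<forall>\<alpha>'\<in>cv p. \<forall>\<beta>\<in>cv p. \<alpha> < \<alpha>' \<and> \<alpha>' < \<beta> \<longrightarrow> crho p {\<alpha>, \<beta>} \<noteq> crho p {\<alpha>', \<beta>}"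
     "inj_on (cgamma p) (cv p)" "\<forall>\<alpha>\<in>cv p. cgamma p \<alpha> \<in> bits (cn p)"
     "\<forall>\<alpha>\<in>cv p. \<forall>\<beta>\<in>cv p. \<alpha> < \<beta> \<longrightarrow> cgamma p \<alpha> = cf p (crho p {\<alpha>, \<beta>}) (cgamma p \<beta>)"
    using assms unfolding isCond_def by blast+
  obtain m where m: "cs p \<subseteq> {..<m}" using finite_nat_bounded[OF P(1)] by blast
  have cnt: "countable (cv p)" using P(2) by (rule countable_finite)
  let ?n = "cn p"
  let ?N = "Suc (cn p)"
  define idx where "idx \<alpha> = m + to_nat_on (cv p) \<alpha>" for \<alpha>
  define g where "g \<alpha> = (if \<alpha> = \<xi> then replicate ?n False @ [True] else cgamma p \<alpha> @ [False])" for \<alpha>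
  define q :: "'a cond" where "q = \<lparr>cn = ?N, cs = cs p \<union> idx ` cv p, cv = insert \<xi> (cv p),
     cf = (\<lambda>i. if i \<in> cs p then (\<lambda>\<eta>. cf p i (take ?n \<eta>) @ [False])
               else (\<lambda>\<eta>. let \<alpha> = from_nat_into (cv p) (i - m) in if \<alpha> < \<xi> then g \<alpha> else g \<xi>)),
     cgamma = g, crho = (\<lambda>X. if \<xi> \<in> X then idx (the_elem (X - {\<xi>})) else crho p X)\<rparr>"
  have idx_inj: "\<alpha> \<in> cv p \<Longrightarrow> \<beta> \<in> cv p \<Longrightarrow> idx \<alpha> = idx \<beta> \<Longrightarrow> \<alpha> = \<beta>" for \<alpha> \<beta>
    using inj_on_to_nat_on[OF cnt] by (auto simp: idx_def inj_on_def)
  have idx_new: "idx \<alpha> \<notin> cs p" for \<alpha> using m by (auto simp: idx_def)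
  have idx_back: "\<alpha> \<in> cv p \<Longrightarrow> from_nat_into (cv p) (idx \<alpha> - m) = \<alpha>" for \<alpha>
    using cnt by (simp add: idx_def from_nat_into_to_nat_on)
  have rho_xi: "\<alpha> \<noteq> \<xi> \<Longrightarrow> crho q {\<alpha>, \<xi>} = idx \<alpha>" "\<alpha> \<noteq> \<xi> \<Longrightarrow> crho q {\<xi>, \<alpha>} = idx \<alpha>" for \<alpha>
    by (auto simp: q_def insert_Diff_if)
  have rho_old: "\<xi> \<notin> X \<Longrightarrow> crho q X = crho p X" for X by (simp add: q_def)
  have gb: "\<alpha> \<in> insert \<xi> (cv p) \<Longrightarrow> g \<alpha> \<in> bits ?N" for \<alpha>
    using P(7) by (auto simp: g_def bits_def)
  have L: "Lip1 ?N (\<lambda>\<eta>. cf p i (take ?n \<eta>) @ [False])" if "i \<in> cs p" for i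
    using Lip1_pad[of ?n "cf p i" ?N] P(3) that by simp
  have "isCond q" unfolding isCond_def
  proof (intro conjI)
    show "finite (cs q)" "finite (cv q)" using P by (auto simp: q_def)
    show "\<forall>i\<in>cs q. Lip1 (cn q) (cf q i)"
    proof
      fix i assume "i \<in> cs q"
      then consider "i \<in> cs p" | \<alpha> where "\<alpha> \<in> cv p" "i = idx \<alpha>" by (auto simp: q_def)
      thus "Lip1 (cn q) (cf q i)"
      proof cases
        case 1 thus ?thesis using L by (simp add: q_def)
      next
        case 2 thus ?thesis using idx_new[of \<alpha>] idx_back[of \<alpha>] gb
          by (auto simp: q_def Let_def intro!: Lip1_const)
      qed
    qed
    show "\<forall>\<alpha>\<in>cv q. \<forall>\<beta>\<in>cv q. \<alpha> \<noteq> \<beta> \<longrightarrow> crho q {\<alpha>, \<beta>} \<in> cs q"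
    proof (intro ballI impI)
      fix \<alpha> \<beta> assume h: "\<alpha> \<in> cv q" "\<beta> \<in> cv q" "\<alpha> \<noteq> \<beta>"
      show "crho q {\<alpha>, \<beta>} \<in> cs q"
      proof (cases "\<alpha> = \<xi> \<or> \<beta> = \<xi>")
        case True thus ?thesis using h rho_xi by (auto simp: q_def)
      next
        case False thus ?thesis using h P(4) rho_old[of "{\<alpha>,\<beta>}"] by (auto simp: q_def)
      qed
    qed
    show "\<forall>\<alpha>\<in>cv q. \<forall>\<alpha>'\<in>cv q. \<forall>\<beta>\<in>cv q. \<alpha> < \<alpha>' \<and> \<alpha>' < \<beta> \<longrightarrow> crho q {\<alpha>, \<beta>} \<noteq> crho q {\<alpha>', \<beta>}"
    proof (intro ballI impI)
      fix \<alpha> \<alpha>' \<beta> assume h: "\<alpha> \<in> cv q" "\<alpha>' \<in> cv q" "\<beta> \<in> cv q" "\<alpha> < \<alpha>' \<and> \<alpha>' < \<beta>"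
      have hv: "\<alpha> \<in> insert \<xi> (cv p)" "\<alpha>' \<in> insert \<xi> (cv p)" "\<beta> \<in> insert \<xi> (cv p)"
        using h by (auto simp: q_def)
      show "crho q {\<alpha>, \<beta>} \<noteq> crho q {\<alpha>', \<beta>}"
      proof (cases "\<beta> = \<xi>")
        case True
        thus ?thesis using h hv rho_xi idx_inj[of \<alpha> \<alpha>'] by auto
      next
        case nb: False
        show ?thesis
        proof (cases "\<alpha> = \<xi>")
          case True
          hence "\<alpha>' \<in> cv p" "\<beta> \<in> cv p" "\<alpha>' \<noteq> \<beta>" "\<xi> \<notin> {\<alpha>', \<beta>}" using h hv nb by auto
          thus ?thesis using True rho_xi(2)[of \<beta>] nb idx_new[of \<beta>] P(4) rho_old[of "{\<alpha>',\<beta>}"] by force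
        next
          case na: False
          show ?thesis
          proof (cases "\<alpha>' = \<xi>")
            case True
            hence "\<alpha> \<in> cv p" "\<beta> \<in> cv p" "\<alpha> \<noteq> \<beta>" "\<xi> \<notin> {\<alpha>, \<beta>}" using h hv nb na by auto
            thus ?thesis using True rho_xi(2)[of \<beta>] nb idx_new[of \<beta>] P(4) rho_old[of "{\<alpha>,\<beta>}"] by force
          next
            case False
            thus ?thesis using na nb h hv P(5) rho_old[of "{\<alpha>,\<beta>}"] rho_old[of "{\<alpha>',\<beta>}"] by auto
          qed
        qed
      qed
    qed
    show "inj_on (cgamma q) (cv q)"
      using P(6) P(7) assms(2) by (auto simp: q_def inj_on_def g_def bits_def)
    show "\<forall>\<alpha>\<in>cv q. cgamma q \<alpha> \<in> bits (cn q)" using gb by (simp add: q_def)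
    show "\<forall>\<alpha>\<in>cv q. \<forall>\<beta>\<in>cv q. \<alpha> < \<beta> \<longrightarrow> cgamma q \<alpha> = cf q (crho q {\<alpha>, \<beta>}) (cgamma q \<beta>)"
    proof (intro ballI impI)
      fix \<alpha> \<beta> assume h: "\<alpha> \<in> cv q" "\<beta> \<in> cv q" "\<alpha> < \<beta>"
      have hv: "\<alpha> \<in> insert \<xi> (cv p)" "\<beta> \<in> insert \<xi> (cv p)" using h by (auto simp: q_def)
      show "cgamma q \<alpha> = cf q (crho q {\<alpha>, \<beta>}) (cgamma q \<beta>)"
      proof (cases "\<beta> = \<xi>")
        case True
        hence "\<alpha> \<in> cv p" "\<alpha> \<noteq> \<xi>" using h hv by auto
        thus ?thesis using True rho_xi(1)[of \<alpha>] idx_new[of \<alpha>] idx_back[of \<alpha>] h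
          by (simp add: q_def Let_def)
      next
        case nb: False
        show ?thesis
        proof (cases "\<alpha> = \<xi>")
          case True
          hence "\<beta> \<in> cv p" "\<beta> \<noteq> \<xi>" using h hv nb by auto
          thus ?thesis using True rho_xi(2)[of \<beta>] idx_new[of \<beta>] idx_back[of \<beta>] h
            by (auto simp: q_def Let_def)
        next
          case False
          hence a: "\<alpha> \<in> cv p" "\<beta> \<in> cv p" "\<alpha> \<noteq> \<beta>" "\<xi> \<notin> {\<alpha>, \<beta>}" using h hv nb by auto
          hence "crho p {\<alpha>,\<beta>} \<in> cs p" using P(4) by auto
          moreover have "length (cgamma p \<beta>) = cn p" using P(7) a by (auto simp: bits_def)
          ultimately show ?thesis using P(8) a h rho_old[of "{\<alpha>,\<beta>}"]
            by (auto simp: q_def g_def)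
        qed
      qed
    qed
  qed
  moreover have "cond_le p q" unfolding cond_le_def
  proof (intro conjI ballI impI)
    fix i \<eta> assume "i \<in> cs p" "\<eta> \<in> bits (cn q)"
    moreover hence "cf p i (take ?n \<eta>) \<in> bits ?n" using P(3) by (auto simp: Lip1_def q_def bits_def)
    ultimately show "take (cn p) (cf q i \<eta>) = cf p i (take (cn p) \<eta>)"
      by (auto simp: q_def bits_def)
  next
    fix \<alpha> assume "\<alpha> \<in> cv p"
    thus "take (cn p) (cgamma q \<alpha>) = cgamma p \<alpha>" using P(7) assms(2)
      by (auto simp: q_def g_def bits_def)
  next
    fix \<alpha> \<beta> assume "\<alpha> \<in> cv p" "\<beta> \<in> cv p" "\<alpha> \<noteq> \<beta>"
    thus "crho q {\<alpha>, \<beta>} = crho p {\<alpha>, \<beta>}" using assms(2) rho_old[of "{\<alpha>,\<beta>}"] by auto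
  qed (auto simp: q_def)
  ultimately show ?thesis by (auto simp: q_def)
qed

lemma cond_le_refl:
  assumes "isCond p" shows "cond_le p p"
  using assms unfolding isCond_def cond_le_def Lip1_def bits_def by auto

theorem lemma3p3:
  fixes k :: nat and \<xi> :: "'a::wellorder"
  assumes omega1_init: "\<And>x::'a. countable {y. y < x}"
    and omega1_unc: "\<not> countable (UNIV :: 'a set)"
  shows "dense_in_P (Dset k :: 'a cond set) \<and> dense_in_P (Eset \<xi>)"
proof
  show "dense_in_P (Dset k :: 'a cond set)"
    unfolding dense_in_P_def Dset_def Pforce_def
    using D_dense_step[where k=k] by fastforce
  show "dense_in_P (Eset \<xi>)"
    unfolding dense_in_P_def Eset_def Pforce_def
  proof (intro conjI ballI)
    fix p :: "'a cond" assume "p \<in> {p. isCond p}"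
    hence p: "isCond p" by simp
    show "\<exists>q\<in>{p \<in> {p. isCond p}. \<xi> \<in> cv p}. cond_le p q"
    proof (cases "\<xi> \<in> cv p")
      case True thus ?thesis using p cond_le_refl by blast
    next
      case False thus ?thesis using E_dense_step[OF p False] by blast
    qed
  qed auto
qed

end
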